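(* Let $G$ be a compact connected Lie group with identity $e$. Let $N=(N(t))_{t\ge0}$ be a Poisson process with parameter $\lambda>0$, let $(X_n)_{n\ge1}$ be i.i.d. $G$-valued random variables, with the family $(X_n)_{n\ge1}$ independent of $N$, set $X_0=e$, and define the left compound Poisson process $Y(t)=\prod_{n=0}^{N(t)}X_n$ (product ordered from left to right). Then for every $t\ge0$: (1) if $X_1$ is inverse invariant then $Y(t)$ is inverse invariant; (2) if $X_1$ is conjugate invariant then $Y(t)$ is conjugate invariant.
   Context: A $G$-valued random variable $X$ is inverse invariant if $X\stackrel{d}{=}X^{-1}$, and conjugate invariant if $X\stackrel{d}{=}kXk^{-1}$ for all $k\in G$, where $\stackrel{d}{=}$ denotes equality in distribution. *)

theory Defs
  imports "HOL-Probability.Probability" "HOL-Algebra.Group"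
begin

definition borel_of :: "'a topology \<Rightarrow> 'a measure" where
  "borel_of T = sigma (topspace T) {U. openin T U}"

definition locally_euclidean :: "'a topology \<Rightarrow> bool" where
  "locally_euclidean T \<longleftrightarrow> (\<exists>d::nat. \<forall>x\<in>topspace T. \<exists>U V.
      openin T U \<and> x \<in> U \<and> openin (Euclidean_space d) V \<and>
      (subtopology T U) homeomorphic_space (subtopology (Euclidean_space d) V))"

definition topological_group :: "('g, 'b) monoid_scheme \<Rightarrow> 'g topology \<Rightarrow> bool" where
  "topological_group G T \<longleftrightarrow> group G \<and> topspace T = carrier G \<and> Hausdorff_space T \<and>
     continuous_map (prod_topology T T) T (\<lambda>p. fst p \<otimes>\<^bsub>G\<^esub> snd p) \<and>
     continuous_map T T (\<lambda>x. inv\<^bsub>G\<^esub> x)"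

text \<open>Compact connected Lie group, rendered as a compact connected locally Euclidean
  topological group (Gleason-Montgomery-Zippin: these are exactly the Lie groups).\<close>
definition compact_connected_lie_group :: "('g, 'b) monoid_scheme \<Rightarrow> 'g topology \<Rightarrow> bool" where
  "compact_connected_lie_group G T \<longleftrightarrow> topological_group G T \<and> locally_euclidean T \<and>
     compact_space T \<and> connected_space T"

definition poisson_process :: "'w measure \<Rightarrow> real \<Rightarrow> (real \<Rightarrow> 'w \<Rightarrow> nat) \<Rightarrow> bool" where
  "poisson_process M l N \<longleftrightarrow> prob_space M \<and>
     (\<forall>t\<ge>0. N t \<in> M \<rightarrow>\<^sub>M count_space UNIV) \<and>
     (AE \<omega> in M. N 0 \<omega> = 0) \<and>
     (\<forall>s t. 0 \<le> s \<and> s < t \<longrightarrow>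
        (AE \<omega> in M. N s \<omega> \<le> N t \<omega>) \<and>
        distr M (count_space UNIV) (\<lambda>\<omega>. N t \<omega> - N s \<omega>) = measure_pmf (poisson_pmf (l * (t - s)))) \<and>
     (\<forall>(ts::nat \<Rightarrow> real) (k::nat). 0 \<le> ts 0 \<and> (\<forall>i<k. ts i < ts (Suc i)) \<longrightarrow>
        prob_space.indep_vars M (\<lambda>_. count_space UNIV) (\<lambda>i \<omega>. N (ts (Suc i)) \<omega> - N (ts i) \<omega>) {..<k})"

definition inverse_invariant :: "('g, 'b) monoid_scheme \<Rightarrow> 'g measure \<Rightarrow> 'w measure \<Rightarrow> ('w \<Rightarrow> 'g) \<Rightarrow> bool" where
  "inverse_invariant G MG M Z \<longleftrightarrow> distr M MG Z = distr M MG (\<lambda>\<omega>. inv\<^bsub>G\<^esub> (Z \<omega>))"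

definition conjugate_invariant :: "('g, 'b) monoid_scheme \<Rightarrow> 'g measure \<Rightarrow> 'w measure \<Rightarrow> ('w \<Rightarrow> 'g) \<Rightarrow> bool" where
  "conjugate_invariant G MG M Z \<longleftrightarrow>
     (\<forall>k\<in>carrier G. distr M MG Z = distr M MG (\<lambda>\<omega>. k \<otimes>\<^bsub>G\<^esub> Z \<omega> \<otimes>\<^bsub>G\<^esub> inv\<^bsub>G\<^esub> k))"

definition left_prod :: "('g, 'b) monoid_scheme \<Rightarrow> (nat \<Rightarrow> 'w \<Rightarrow> 'g) \<Rightarrow> nat \<Rightarrow> 'w \<Rightarrow> 'g" where
  "left_prod G X n \<omega> = foldl (\<lambda>a i. a \<otimes>\<^bsub>G\<^esub> X i \<omega>) \<one>\<^bsub>G\<^esub> [0..<Suc n]"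

definition left_cpp :: "('g, 'b) monoid_scheme \<Rightarrow> (nat \<Rightarrow> 'w \<Rightarrow> 'g) \<Rightarrow> (real \<Rightarrow> 'w \<Rightarrow> nat) \<Rightarrow> real \<Rightarrow> 'w \<Rightarrow> 'g" where
  "left_cpp G X N t \<omega> = left_prod G X (N t \<omega>) \<omega>"

end

theory Submission imports Defs begin


definition pl :: "('g,'b) monoid_scheme \<Rightarrow> 'g list \<Rightarrow> 'g" where
  "pl G xs = foldl (\<lambda>a b. a \<otimes>\<^bsub>G\<^esub> b) \<one>\<^bsub>G\<^esub> xs"

lemma pl_closed:
  assumes "group G" "set xs \<subseteq> carrier G" shows "pl G xs \<in> carrier G"
  using assms(2)
proof (induction xs rule: rev_induct)
  case Nil then show ?case using assms(1) by (simp add: pl_def group.is_monoid monoid.one_closed)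
next
  case (snoc x xs) then show ?case using assms(1)
    by (simp add: pl_def group.is_monoid monoid.m_closed)
qed

lemma foldl_acc:
  assumes "group G" "a \<in> carrier G" "set xs \<subseteq> carrier G"
  shows "foldl (\<lambda>a b. a \<otimes>\<^bsub>G\<^esub> b) a xs = a \<otimes>\<^bsub>G\<^esub> pl G xs"
  using assms(2,3)
proof (induction xs arbitrary: a)
  case Nil then show ?case using assms(1) by (simp add: pl_def group.is_monoid monoid.r_one)
next
  case (Cons x xs)
  interpret group G by fact
  have "foldl (\<lambda>a b. a \<otimes>\<^bsub>G\<^esub> b) a (x # xs) = (a \<otimes>\<^bsub>G\<^esub> x) \<otimes>\<^bsub>G\<^esub> pl G xs"
    using Cons by simp
  moreover have "pl G (x # xs) = x \<otimes>\<^bsub>G\<^esub> pl G xs"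
    using Cons.IH[of "\<one>\<^bsub>G\<^esub> \<otimes>\<^bsub>G\<^esub> x"] Cons.prems by (simp add: pl_def)
  ultimately show ?case using Cons.prems pl_closed[OF assms(1), of xs] by (simp add: m_assoc)
qed

lemma pl_Cons:
  assumes "group G" "x \<in> carrier G" "set xs \<subseteq> carrier G"
  shows "pl G (x # xs) = x \<otimes>\<^bsub>G\<^esub> pl G xs"
  using foldl_acc[OF assms(1), of "\<one>\<^bsub>G\<^esub> \<otimes>\<^bsub>G\<^esub> x" xs] assms
  by (simp add: pl_def group.is_monoid monoid.l_one)

lemma pl_snoc: "pl G (xs @ [x]) = pl G xs \<otimes>\<^bsub>G\<^esub> x"
  by (simp add: pl_def)

lemma pl_inv:
  assumes "group G" "set xs \<subseteq> carrier G"
  shows "inv\<^bsub>G\<^esub> (pl G xs) = pl G (rev (map (\<lambda>a. inv\<^bsub>G\<^esub> a) xs))"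
  using assms(2)
proof (induction xs)
  case Nil then show ?case using assms(1) by (simp add: pl_def group.is_monoid monoid.inv_one)
next
  case (Cons x xs)
  interpret group G by fact
  show ?case using Cons pl_closed[OF assms(1), of xs]
    by (simp add: pl_Cons[OF assms(1)] pl_snoc inv_mult_group)
qed

lemma pl_conj:
  assumes "group G" "set xs \<subseteq> carrier G" "k \<in> carrier G"
  shows "k \<otimes>\<^bsub>G\<^esub> pl G xs \<otimes>\<^bsub>G\<^esub> inv\<^bsub>G\<^esub> k = pl G (map (\<lambda>a. k \<otimes>\<^bsub>G\<^esub> a \<otimes>\<^bsub>G\<^esub> inv\<^bsub>G\<^esub> k) xs)"
  using assms(2)
proof (induction xs)
  case Nil then show ?case using assms by (simp add: pl_def group.r_inv group.is_monoid monoid.r_one)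
next
  case (Cons x xs)
  interpret group G by fact
  have p: "pl G xs \<in> carrier G" using Cons pl_closed[OF assms(1)] by simp
  have "k \<otimes>\<^bsub>G\<^esub> pl G (x#xs) \<otimes>\<^bsub>G\<^esub> inv\<^bsub>G\<^esub> k = (k \<otimes>\<^bsub>G\<^esub> x \<otimes>\<^bsub>G\<^esub> inv\<^bsub>G\<^esub> k) \<otimes>\<^bsub>G\<^esub> (k \<otimes>\<^bsub>G\<^esub> pl G xs \<otimes>\<^bsub>G\<^esub> inv\<^bsub>G\<^esub> k)"
  proof -
    have c: "inv\<^bsub>G\<^esub> k \<otimes>\<^bsub>G\<^esub> (k \<otimes>\<^bsub>G\<^esub> z) = z" if "z \<in> carrier G" for z
      using that assms(3) by (simp add: m_assoc[symmetric])
    show ?thesis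
      using Cons.prems assms(3) p by (simp add: pl_Cons[OF assms(1)] m_assoc c)
  qed
  moreover have "set (map (\<lambda>a. k \<otimes>\<^bsub>G\<^esub> a \<otimes>\<^bsub>G\<^esub> inv\<^bsub>G\<^esub> k) xs) \<subseteq> carrier G"
    using Cons.prems assms(3) by auto
  ultimately show ?case using Cons assms(3)
    by (simp add: pl_Cons[OF assms(1)])
qed




lemma space_borel_of: "space (borel_of T) = topspace T"
  unfolding borel_of_def by (rule space_measure_of) (auto dest: openin_subset)

lemma pl_meas:
  assumes mm: "(\<lambda>p. fst p \<otimes>\<^bsub>G\<^esub> snd p) \<in> MG \<Otimes>\<^sub>M MG \<rightarrow>\<^sub>M MG"
    and one: "\<one>\<^bsub>G\<^esub> \<in> space MG" and ys: "set ys \<subseteq> I"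
  shows "(\<lambda>x. pl G (map x ys)) \<in> PiM I (\<lambda>_. MG) \<rightarrow>\<^sub>M MG"
  using ys
proof (induction ys rule: rev_induct)
  case Nil then show ?case using one by (simp add: pl_def)
next
  case (snoc y ys)
  have "(\<lambda>x. (\<lambda>p. fst p \<otimes>\<^bsub>G\<^esub> snd p) (pl G (map x ys), x y)) \<in> PiM I (\<lambda>_. MG) \<rightarrow>\<^sub>M MG"
  proof (rule measurable_compose[OF _ mm])
    show "(\<lambda>x. (pl G (map x ys), x y)) \<in> PiM I (\<lambda>_. MG) \<rightarrow>\<^sub>M MG \<Otimes>\<^sub>M MG"
      by (rule measurable_Pair) (use snoc in \<open>auto intro: measurable_component_singleton\<close>)
  qed
  then show ?case by (simp add: pl_snoc)
qed

lemma per_n: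
  fixes MG :: "'g measure" and X :: "nat \<Rightarrow> 'w \<Rightarrow> 'g"
  assumes P: "prob_space M" and grp: "group G" and sp: "space MG = carrier G"
    and mm: "(\<lambda>p. fst p \<otimes>\<^bsub>G\<^esub> snd p) \<in> MG \<Otimes>\<^sub>M MG \<rightarrow>\<^sub>M MG"
    and fm: "f \<in> MG \<rightarrow>\<^sub>M MG"
    and X_rv: "\<forall>n\<ge>1. X n \<in> M \<rightarrow>\<^sub>M MG"
    and X_indep: "prob_space.indep_vars M (\<lambda>_. MG) X {1..}"
    and X_ident: "\<forall>n\<ge>1. distr M MG (X n) = distr M MG (X 1)"
    and finv: "distr M MG (\<lambda>\<omega>. f (X 1 \<omega>)) = distr M MG (X 1)"
    and \<sigma>: "inj_on \<sigma> {1..n}" "\<sigma> \<in> {1..n} \<rightarrow> {1..n}"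
    and alg: "\<And>x. (\<forall>i\<in>{1..n}. x i \<in> carrier G) \<Longrightarrow>
        f (pl G (map x [1..<Suc n])) = pl G (map (\<lambda>i. f (x (\<sigma> i))) [1..<Suc n])"
    and n: "n \<ge> 1"
  shows "distr M MG (\<lambda>\<omega>. pl G (map (\<lambda>i. X i \<omega>) [1..<Suc n]))
       = distr M MG (\<lambda>\<omega>. f (pl G (map (\<lambda>i. X i \<omega>) [1..<Suc n])))"
proof -
  interpret prob_space M by fact
  define I where "I = {1..n}"
  define PI where "PI = PiM I (\<lambda>_. MG)"
  define \<mu> where "\<mu> = distr M MG (X 1)"
  define Q where "Q = PiM I (\<lambda>_. \<mu>)"
  define L where "L = (\<lambda>x. pl G (map x [1..<Suc n]))"
  have I0: "I \<noteq> {}" using n by (auto simp: I_def)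
  have sI: "set [1..<Suc n] \<subseteq> I" by (auto simp: I_def)
  have one: "\<one>\<^bsub>G\<^esub> \<in> space MG" using sp grp by (simp add: group.is_monoid monoid.one_closed)
  have Lm: "L \<in> PI \<rightarrow>\<^sub>M MG" unfolding L_def PI_def by (rule pl_meas[OF mm one sI])
  have Xm: "\<And>i. i \<in> I \<Longrightarrow> X i \<in> M \<rightarrow>\<^sub>M MG" using X_rv by (auto simp: I_def)
  have \<sigma>I: "\<And>i. i \<in> I \<Longrightarrow> \<sigma> i \<in> I" using \<sigma> by (auto simp: I_def)
  have I1: "\<And>i. i \<in> I \<Longrightarrow> i \<ge> 1" by (auto simp: I_def)
  have Xv: "(\<lambda>\<omega>. \<lambda>i\<in>I. X i \<omega>) \<in> M \<rightarrow>\<^sub>M PI"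
    unfolding PI_def by (rule measurable_restrict) (rule Xm)
  have indI: "indep_vars (\<lambda>_. MG) X I"
    by (rule indep_vars_subset[OF X_indep]) (auto simp: I_def)
  have muX: "\<And>i. i \<in> I \<Longrightarrow> distr M MG (X i) = \<mu>" unfolding \<mu>_def by (rule X_ident[rule_format, OF I1])
  have D0: "distr M PI (\<lambda>\<omega>. \<lambda>i\<in>I. X i \<omega>) = Q"
  proof -
    have "distr M PI (\<lambda>\<omega>. \<lambda>i\<in>I. X i \<omega>) = PiM I (\<lambda>i. distr M MG (X i))"
      unfolding PI_def using indep_vars_iff_distr_eq_PiM'[OF I0 Xm] indI by simp
    also have "\<dots> = Q" unfolding Q_def by (rule PiM_cong) (auto simp: muX)
    finally show ?thesis .
  qed
  have pmu: "prob_space \<mu>" unfolding \<mu>_def by (rule prob_space_distr) (use X_rv in auto)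
  have smu: "sets \<mu> = sets MG" by (simp add: \<mu>_def)
  have sQ: "sets Q = sets PI" unfolding Q_def PI_def by (rule sets_PiM_cong) (auto simp: smu)
  have rm: "(\<lambda>x. \<lambda>i\<in>I. x (\<sigma> i)) \<in> PI \<rightarrow>\<^sub>M PI"
    unfolding PI_def by (rule measurable_restrict) (auto intro: measurable_component_singleton \<sigma>I)
  have D1: "distr M PI (\<lambda>\<omega>. \<lambda>i\<in>I. X (\<sigma> i) \<omega>) = Q"
  proof -
    have "distr M PI (\<lambda>\<omega>. \<lambda>i\<in>I. X (\<sigma> i) \<omega>) = distr M PI ((\<lambda>x. \<lambda>i\<in>I. x (\<sigma> i)) \<circ> (\<lambda>\<omega>. \<lambda>i\<in>I. X i \<omega>))"
      by (rule distr_cong) (auto simp: \<sigma>I fun_eq_iff)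
    also have "\<dots> = distr (distr M PI (\<lambda>\<omega>. \<lambda>i\<in>I. X i \<omega>)) PI (\<lambda>x. \<lambda>i\<in>I. x (\<sigma> i))"
      by (rule distr_distr[symmetric, OF rm Xv])
    also have "\<dots> = distr Q Q (\<lambda>x. \<lambda>i\<in>I. x (\<sigma> i))"
      unfolding D0 by (rule distr_cong) (auto simp: sQ)
    also have "\<dots> = Q"
      using distr_PiM_reindex[of I "\<lambda>_. \<mu>" \<sigma> I] pmu \<sigma> unfolding Q_def I_def by auto
    finally show ?thesis .
  qed
  have Xrm: "\<And>i. i \<in> I \<Longrightarrow> X (\<sigma> i) \<in> M \<rightarrow>\<^sub>M MG" using Xm \<sigma>I by auto
  have indR: "indep_vars (\<lambda>_. MG) (\<lambda>i. X (\<sigma> i)) I"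
  proof -
    have "PiM I (\<lambda>i. distr M MG (X (\<sigma> i))) = Q" unfolding Q_def by (rule PiM_cong) (auto simp: muX \<sigma>I)
    then show ?thesis using indep_vars_iff_distr_eq_PiM'[OF I0 Xrm] D1 unfolding PI_def by simp
  qed
  have indF: "indep_vars (\<lambda>_. MG) (\<lambda>i \<omega>. f (X (\<sigma> i) \<omega>)) I"
    by (rule indep_vars_compose2[OF indR]) (rule fm)
  have Xfm: "\<And>i. i \<in> I \<Longrightarrow> (\<lambda>\<omega>. f (X (\<sigma> i) \<omega>)) \<in> M \<rightarrow>\<^sub>M MG"
    using Xrm fm by (auto intro: measurable_compose)
  have muF: "distr M MG (\<lambda>\<omega>. f (X (\<sigma> i) \<omega>)) = \<mu>" if "i \<in> I" for i
  proof -
    have "distr M MG (\<lambda>\<omega>. f (X (\<sigma> i) \<omega>)) = distr (distr M MG (X (\<sigma> i))) MG f"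
      using distr_distr[OF fm Xrm[OF that]] by (simp add: comp_def)
    also have "\<dots> = distr \<mu> MG f" using muX \<sigma>I that by simp
    also have "\<dots> = distr (distr M MG (X 1)) MG f" by (simp add: \<mu>_def)
    also have "\<dots> = distr M MG (\<lambda>\<omega>. f (X 1 \<omega>))"
      using distr_distr[OF fm Xm[of 1]] n by (simp add: comp_def I_def)
    finally show ?thesis using finv by (simp add: \<mu>_def)
  qed
  have Xfv: "(\<lambda>\<omega>. \<lambda>i\<in>I. f (X (\<sigma> i) \<omega>)) \<in> M \<rightarrow>\<^sub>M PI"
    unfolding PI_def by (rule measurable_restrict) (rule Xfm)
  have D2: "distr M PI (\<lambda>\<omega>. \<lambda>i\<in>I. f (X (\<sigma> i) \<omega>)) = Q"
  proof -
    have "distr M PI (\<lambda>\<omega>. \<lambda>i\<in>I. f (X (\<sigma> i) \<omega>)) = PiM I (\<lambda>i. distr M MG (\<lambda>\<omega>. f (X (\<sigma> i) \<omega>)))"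
      unfolding PI_def using indep_vars_iff_distr_eq_PiM'[OF I0 Xfm] indF by simp
    also have "\<dots> = Q" unfolding Q_def by (rule PiM_cong) (auto simp: muF)
    finally show ?thesis .
  qed
  have eq: "\<And>g. map (restrict g I) [1..<Suc n] = map g [1..<Suc n]"
    by (rule map_cong) (use sI in auto)
  have "distr M MG (\<lambda>\<omega>. pl G (map (\<lambda>i. X i \<omega>) [1..<Suc n])) = distr M MG (L \<circ> (\<lambda>\<omega>. \<lambda>i\<in>I. X i \<omega>))"
    by (rule distr_cong) (simp_all only: L_def comp_def eq)
  also have "\<dots> = distr Q MG L" using distr_distr[OF Lm Xv] D0 by simp
  also have "\<dots> = distr M MG (L \<circ> (\<lambda>\<omega>. \<lambda>i\<in>I. f (X (\<sigma> i) \<omega>)))" using distr_distr[OF Lm Xfv] D2 by simp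
  also have "\<dots> = distr M MG (\<lambda>\<omega>. f (pl G (map (\<lambda>i. X i \<omega>) [1..<Suc n])))"
  proof (rule distr_cong)
    fix \<omega> assume w: "\<omega> \<in> space M"
    have c: "\<forall>i\<in>{1..n}. X i \<omega> \<in> carrier G"
    proof
      fix i assume "i \<in> {1..n}"
      then have "X i \<in> M \<rightarrow>\<^sub>M MG" using Xm unfolding I_def by simp
      from measurable_space[OF this w] show "X i \<omega> \<in> carrier G" using sp by simp
    qed
    show "(L \<circ> (\<lambda>\<omega>. \<lambda>i\<in>I. f (X (\<sigma> i) \<omega>))) \<omega> = f (pl G (map (\<lambda>i. X i \<omega>) [1..<Suc n]))"
      using alg[of "\<lambda>i. X i \<omega>", OF c] eq[of "\<lambda>i. f (X (\<sigma> i) \<omega>)"] by (simp only: L_def comp_def)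
  qed auto
  finally show ?thesis .
qed




lemma lpe: "\<forall>\<omega>. X 0 \<omega> = \<one>\<^bsub>G\<^esub> \<Longrightarrow> group G \<Longrightarrow>
   left_prod G X n \<omega> = pl G (map (\<lambda>i. X i \<omega>) [1..<Suc n])"
  unfolding left_prod_def pl_def
  by (simp add: upt_conv_Cons foldl_map group.is_monoid monoid.l_one monoid.one_closed del: upt_Suc)

lemma decomp:
  fixes MG :: "'g measure" and X :: "nat \<Rightarrow> 'w \<Rightarrow> 'g" and N :: "real \<Rightarrow> 'w \<Rightarrow> nat"
  assumes P: "prob_space M" and grp: "group G" and sp: "space MG = carrier G"
    and mm: "(\<lambda>p. fst p \<otimes>\<^bsub>G\<^esub> snd p) \<in> MG \<Otimes>\<^sub>M MG \<rightarrow>\<^sub>M MG"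
    and fm: "f \<in> MG \<rightarrow>\<^sub>M MG" and f1: "f \<one>\<^bsub>G\<^esub> = \<one>\<^bsub>G\<^esub>"
    and X_rv: "\<forall>n\<ge>1. X n \<in> M \<rightarrow>\<^sub>M MG"
    and X0: "\<forall>\<omega>. X 0 \<omega> = \<one>\<^bsub>G\<^esub>"
    and Nm: "N t \<in> M \<rightarrow>\<^sub>M count_space UNIV" and t: "t \<ge> 0"
    and ind: "prob_space.indep_set M
        {(\<lambda>\<omega>. \<lambda>n\<in>{1..}. X n \<omega>) -` A \<inter> space M | A. A \<in> sets (Pi\<^sub>M {1..} (\<lambda>_. MG))}
        {(\<lambda>\<omega>. \<lambda>s\<in>{0..}. N s \<omega>) -` B \<inter> space M | B. B \<in> sets (Pi\<^sub>M {0..} (\<lambda>_. count_space UNIV))}"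
    and pern: "\<And>n. n \<ge> 1 \<Longrightarrow> distr M MG (\<lambda>\<omega>. pl G (map (\<lambda>i. X i \<omega>) [1..<Suc n]))
       = distr M MG (\<lambda>\<omega>. f (pl G (map (\<lambda>i. X i \<omega>) [1..<Suc n])))"
  shows "distr M MG (left_cpp G X N t) = distr M MG (\<lambda>\<omega>. f (left_cpp G X N t \<omega>))"
proof -
  interpret prob_space M by fact
  define PX where "PX = Pi\<^sub>M {1::nat..} (\<lambda>_. MG)"
  define Xf where "Xf = (\<lambda>\<omega>. \<lambda>n\<in>{1::nat..}. X n \<omega>)"
  define Lg where "Lg = (\<lambda>n x. pl G (map x [1..<Suc n]))"
  have one: "\<one>\<^bsub>G\<^esub> \<in> space MG" using sp grp by (simp add: group.is_monoid monoid.one_closed)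
  have Lgm: "Lg n \<in> PX \<rightarrow>\<^sub>M MG" for n
    unfolding Lg_def PX_def by (rule pl_meas[OF mm one]) auto
  have Xfm: "Xf \<in> M \<rightarrow>\<^sub>M PX"
    unfolding Xf_def PX_def by (rule measurable_restrict) (use X_rv in auto)
  have LX: "Lg n (Xf \<omega>) = left_prod G X n \<omega>" for n \<omega>
  proof -
    have m: "map (Xf \<omega>) [1..<Suc n] = map (\<lambda>i. X i \<omega>) [1..<Suc n]"
      by (rule map_cong) (auto simp: Xf_def)
    show ?thesis by (simp only: Lg_def m lpe[where X=X and G=G, OF X0 grp])
  qed
  have lpm: "left_prod G X n \<in> M \<rightarrow>\<^sub>M MG" for n
  proof -
    have "left_prod G X n = Lg n \<circ> Xf" using LX by (auto simp: fun_eq_iff)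
    then show ?thesis using measurable_comp[OF Xfm Lgm] by simp
  qed
  have flpm: "(\<lambda>\<omega>. f (left_prod G X n \<omega>)) \<in> M \<rightarrow>\<^sub>M MG" for n
    using measurable_compose[OF lpm fm] .
  have Ym: "left_cpp G X N t \<in> M \<rightarrow>\<^sub>M MG"
    unfolding left_cpp_def by (rule measurable_compose_countable[OF lpm Nm])
  have fYm: "(\<lambda>\<omega>. f (left_cpp G X N t \<omega>)) \<in> M \<rightarrow>\<^sub>M MG"
    unfolding left_cpp_def by (rule measurable_compose_countable[OF flpm Nm])
  define E where "E = (\<lambda>n. {\<omega>\<in>space M. N t \<omega> = n})"
  have EN: "E n \<in> {(\<lambda>\<omega>. \<lambda>s\<in>{0..}. N s \<omega>) -` B \<inter> space M | B. B \<in> sets (Pi\<^sub>M {0..} (\<lambda>_. count_space UNIV))}" for n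
  proof -
    let ?B = "(\<lambda>h. h t) -` {n} \<inter> space (Pi\<^sub>M {0::real..} (\<lambda>_. count_space (UNIV::nat set)))"
    have "?B \<in> sets (Pi\<^sub>M {0::real..} (\<lambda>_. count_space UNIV))"
      by (rule measurable_sets[OF measurable_component_singleton]) (use t in auto)
    moreover have "(\<lambda>\<omega>. \<lambda>s\<in>{0..}. N s \<omega>) -` ?B \<inter> space M = E n"
      using t by (auto simp: E_def space_PiM)
    ultimately show ?thesis by blast
  qed
  have FX: "{\<omega>\<in>space M. g (left_prod G X n \<omega>) \<in> B} \<in> {(\<lambda>\<omega>. \<lambda>n\<in>{1..}. X n \<omega>) -` A \<inter> space M | A. A \<in> sets (Pi\<^sub>M {1..} (\<lambda>_. MG))}"
    if gm: "g \<in> MG \<rightarrow>\<^sub>M MG" and B: "B \<in> sets MG" for g n B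
  proof -
    let ?A = "(\<lambda>x. g (Lg n x)) -` B \<inter> space PX"
    have "?A \<in> sets PX"
      by (rule measurable_sets[OF measurable_compose[OF Lgm gm] B])
    moreover have "Xf -` ?A \<inter> space M = {\<omega>\<in>space M. g (left_prod G X n \<omega>) \<in> B}"
      using measurable_space[OF Xfm] by (auto simp: LX)
    ultimately show ?thesis unfolding PX_def Xf_def by blast
  qed
  have idm: "(\<lambda>x. x) \<in> MG \<rightarrow>\<^sub>M MG" by simp
  have key: "emeasure (distr M MG (\<lambda>\<omega>. g (left_cpp G X N t \<omega>))) B
      = (\<Sum>n. ennreal (prob (E n) * prob {\<omega>\<in>space M. g (left_prod G X n \<omega>) \<in> B}))"
    if gm: "g \<in> MG \<rightarrow>\<^sub>M MG" and B: "B \<in> sets MG" for g B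
  proof -
    have gY: "(\<lambda>\<omega>. g (left_cpp G X N t \<omega>)) \<in> M \<rightarrow>\<^sub>M MG"
      using measurable_compose[OF Ym gm] .
    have ev: "{\<omega>\<in>space M. g (left_prod G X n \<omega>) \<in> B} \<in> events" for n
      using indep_setD_ev1[OF ind] FX[OF gm B] by blast
    have evE: "E n \<in> events" for n
      using indep_setD_ev2[OF ind] EN by blast
    have evE': "{\<omega>\<in>space M. N t \<omega> = n} \<in> events" for n using evE[of n] by (simp add: E_def)
    have "emeasure (distr M MG (\<lambda>\<omega>. g (left_cpp G X N t \<omega>))) B
        = emeasure M ((\<lambda>\<omega>. g (left_cpp G X N t \<omega>)) -` B \<inter> space M)"
      by (rule emeasure_distr[OF gY B])
    also have "(\<lambda>\<omega>. g (left_cpp G X N t \<omega>)) -` B \<inter> space M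
        = (\<Union>n. {\<omega>\<in>space M. g (left_prod G X n \<omega>) \<in> B} \<inter> E n)"
      by (auto simp: E_def left_cpp_def)
    also have "emeasure M \<dots> = (\<Sum>n. emeasure M ({\<omega>\<in>space M. g (left_prod G X n \<omega>) \<in> B} \<inter> E n))"
      by (rule suminf_emeasure[symmetric]) (use ev evE' in \<open>auto simp: disjoint_family_on_def E_def\<close>)
    also have "\<dots> = (\<Sum>n. ennreal (prob (E n) * prob {\<omega>\<in>space M. g (left_prod G X n \<omega>) \<in> B}))"
      using indep_setD[OF ind FX[OF gm B] EN] by (simp add: emeasure_eq_measure mult.commute)
    finally show ?thesis .
  qed
  have peq: "prob {\<omega>\<in>space M. left_prod G X n \<omega> \<in> B} = prob {\<omega>\<in>space M. f (left_prod G X n \<omega>) \<in> B}"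
    if B: "B \<in> sets MG" for n B
  proof (cases "n = 0")
    case True
    then show ?thesis using lpe[where X=X and G=G, OF X0 grp, of n] f1 by (simp add: pl_def)
  next
    case False
    have "distr M MG (left_prod G X n) = distr M MG (\<lambda>\<omega>. f (left_prod G X n \<omega>))"
    proof -
      have "left_prod G X n = (\<lambda>\<omega>. pl G (map (\<lambda>i. X i \<omega>) [1..<Suc n]))"
        using lpe[where X=X and G=G, OF X0 grp] by (simp add: fun_eq_iff del: upt_Suc)
      then show ?thesis using pern[of n] False by (simp del: upt_Suc)
    qed
    then have "measure (distr M MG (left_prod G X n)) B = measure (distr M MG (\<lambda>\<omega>. f (left_prod G X n \<omega>))) B"
      by simp
    then show ?thesis using B by (simp add: measure_distr[OF lpm] measure_distr[OF flpm] vimage_def Int_def conj_commute)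
  qed
  show ?thesis
  proof (rule measure_eqI)
    fix B assume "B \<in> sets (distr M MG (left_cpp G X N t))"
    then have B: "B \<in> sets MG" by simp
    show "emeasure (distr M MG (left_cpp G X N t)) B = emeasure (distr M MG (\<lambda>\<omega>. f (left_cpp G X N t \<omega>))) B"
      using key[OF idm B] key[OF fm B] peq[OF B] by simp
  qed simp
qed




theorem proposition4:
  fixes G :: "('g, 'b) monoid_scheme" and T :: "'g topology"
    and M :: "'w measure" and l :: "real"
    and N :: "real \<Rightarrow> 'w \<Rightarrow> nat" and X :: "nat \<Rightarrow> 'w \<Rightarrow> 'g" and t :: real
  assumes lie: "compact_connected_lie_group G T"
    and mult_meas: "(\<lambda>p. fst p \<otimes>\<^bsub>G\<^esub> snd p) \<in> borel_of T \<Otimes>\<^sub>M borel_of T \<rightarrow>\<^sub>M borel_of T"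
    and inv_meas: "(\<lambda>x. inv\<^bsub>G\<^esub> x) \<in> borel_of T \<rightarrow>\<^sub>M borel_of T"
    and P: "prob_space M"
    and l_pos: "l > 0"
    and N_poisson: "poisson_process M l N"
    and X_rv: "\<forall>n\<ge>1. X n \<in> M \<rightarrow>\<^sub>M borel_of T"
    and X_indep: "prob_space.indep_vars M (\<lambda>_. borel_of T) X {1..}"
    and X_ident: "\<forall>n\<ge>1. distr M (borel_of T) (X n) = distr M (borel_of T) (X 1)"
    and X_N_indep: "prob_space.indep_set M
        {(\<lambda>\<omega>. \<lambda>n\<in>{1..}. X n \<omega>) -` A \<inter> space M | A. A \<in> sets (Pi\<^sub>M {1..} (\<lambda>_. borel_of T))}
        {(\<lambda>\<omega>. \<lambda>s\<in>{0..}. N s \<omega>) -` B \<inter> space M | B. B \<in> sets (Pi\<^sub>M {0..} (\<lambda>_. count_space UNIV))}"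
    and X0: "\<forall>\<omega>. X 0 \<omega> = \<one>\<^bsub>G\<^esub>"
    and t_nonneg: "t \<ge> 0"
  shows "(inverse_invariant G (borel_of T) M (X 1) \<longrightarrow>
            inverse_invariant G (borel_of T) M (left_cpp G X N t))
       \<and> (conjugate_invariant G (borel_of T) M (X 1) \<longrightarrow>
            conjugate_invariant G (borel_of T) M (left_cpp G X N t))"
proof -
  have grp: "group G" and tc: "topspace T = carrier G"
    using lie by (auto simp: compact_connected_lie_group_def topological_group_def)
  have sp: "space (borel_of T) = carrier G" using tc by (simp add: space_borel_of)
  have Nm: "N t \<in> M \<rightarrow>\<^sub>M count_space UNIV"
    using N_poisson t_nonneg by (auto simp: poisson_process_def)
  interpret G: group G by (rule grp)
  show ?thesis
  proof (intro conjI impI)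
    assume ii: "inverse_invariant G (borel_of T) M (X 1)"
    have pern: "distr M (borel_of T) (\<lambda>\<omega>. pl G (map (\<lambda>i. X i \<omega>) [1..<Suc n]))
       = distr M (borel_of T) (\<lambda>\<omega>. inv\<^bsub>G\<^esub> (pl G (map (\<lambda>i. X i \<omega>) [1..<Suc n])))" if n: "n \<ge> 1" for n
    proof (rule per_n[OF P grp sp mult_meas inv_meas X_rv X_indep X_ident, where \<sigma>="\<lambda>i. Suc n - i"])
      show "distr M (borel_of T) (\<lambda>\<omega>. inv\<^bsub>G\<^esub> (X 1 \<omega>)) = distr M (borel_of T) (X 1)"
        using ii by (simp add: inverse_invariant_def)
      show "inj_on (\<lambda>i. Suc n - i) {1..n}" by (auto simp: inj_on_def)
      show "(\<lambda>i. Suc n - i) \<in> {1..n} \<rightarrow> {1..n}" by auto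
      fix x assume c: "\<forall>i\<in>{1..n}. x i \<in> carrier G"
      have s: "set (map x [1..<Suc n]) \<subseteq> carrier G" using c by auto
      have r: "rev (map (\<lambda>a. inv\<^bsub>G\<^esub> a) (map x [1..<Suc n])) = map (\<lambda>i. inv\<^bsub>G\<^esub> (x (Suc n - i))) [1..<Suc n]"
        by (simp add: list_eq_iff_nth_eq rev_nth Suc_diff_Suc del: upt_Suc)
      show "inv\<^bsub>G\<^esub> (pl G (map x [1..<Suc n])) = pl G (map (\<lambda>i. inv\<^bsub>G\<^esub> (x (Suc n - i))) [1..<Suc n])"
        using pl_inv[OF grp s] r by simp
    qed (rule n)
    show "inverse_invariant G (borel_of T) M (left_cpp G X N t)"
      unfolding inverse_invariant_def
      by (rule decomp[OF P grp sp mult_meas inv_meas _ X_rv X0 Nm t_nonneg X_N_indep pern]) simp_all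
  next
    assume ci: "conjugate_invariant G (borel_of T) M (X 1)"
    show "conjugate_invariant G (borel_of T) M (left_cpp G X N t)"
      unfolding conjugate_invariant_def
    proof
      fix k assume k: "k \<in> carrier G"
      have ks: "k \<in> space (borel_of T)" "inv\<^bsub>G\<^esub> k \<in> space (borel_of T)" using k sp by auto
      have fm: "(\<lambda>x. k \<otimes>\<^bsub>G\<^esub> x \<otimes>\<^bsub>G\<^esub> inv\<^bsub>G\<^esub> k) \<in> borel_of T \<rightarrow>\<^sub>M borel_of T"
      proof -
        have a: "(\<lambda>x. k \<otimes>\<^bsub>G\<^esub> x) \<in> borel_of T \<rightarrow>\<^sub>M borel_of T"
          using measurable_compose[OF measurable_Pair[OF measurable_const[OF ks(1)] measurable_ident] mult_meas]
          by simp
        have b: "(\<lambda>x. (\<lambda>y. y \<otimes>\<^bsub>G\<^esub> inv\<^bsub>G\<^esub> k) (k \<otimes>\<^bsub>G\<^esub> x)) \<in> borel_of T \<rightarrow>\<^sub>M borel_of T"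
          by (rule measurable_compose[OF a])
             (use measurable_compose[OF measurable_Pair[OF measurable_ident measurable_const[OF ks(2)]] mult_meas] in simp)
        then show ?thesis by simp
      qed
      have pern: "distr M (borel_of T) (\<lambda>\<omega>. pl G (map (\<lambda>i. X i \<omega>) [1..<Suc n]))
         = distr M (borel_of T) (\<lambda>\<omega>. k \<otimes>\<^bsub>G\<^esub> pl G (map (\<lambda>i. X i \<omega>) [1..<Suc n]) \<otimes>\<^bsub>G\<^esub> inv\<^bsub>G\<^esub> k)"
        if n: "n \<ge> 1" for n
      proof (rule per_n[OF P grp sp mult_meas fm X_rv X_indep X_ident, where \<sigma>="\<lambda>i. i"])
        show "distr M (borel_of T) (\<lambda>\<omega>. k \<otimes>\<^bsub>G\<^esub> X 1 \<omega> \<otimes>\<^bsub>G\<^esub> inv\<^bsub>G\<^esub> k) = distr M (borel_of T) (X 1)"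
          using ci k by (simp add: conjugate_invariant_def)
        fix x assume c: "\<forall>i\<in>{1..n}. x i \<in> carrier G"
        have s: "set (map x [1..<Suc n]) \<subseteq> carrier G" using c by auto
        show "k \<otimes>\<^bsub>G\<^esub> pl G (map x [1..<Suc n]) \<otimes>\<^bsub>G\<^esub> inv\<^bsub>G\<^esub> k = pl G (map (\<lambda>i. k \<otimes>\<^bsub>G\<^esub> x i \<otimes>\<^bsub>G\<^esub> inv\<^bsub>G\<^esub> k) [1..<Suc n])"
          using pl_conj[OF grp s k] by (simp add: comp_def)
      qed (use n in auto)
      show "distr M (borel_of T) (left_cpp G X N t) =
          distr M (borel_of T) (\<lambda>\<omega>. k \<otimes>\<^bsub>G\<^esub> left_cpp G X N t \<omega> \<otimes>\<^bsub>G\<^esub> inv\<^bsub>G\<^esub> k)"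
        by (rule decomp[OF P grp sp mult_meas fm _ X_rv X0 Nm t_nonneg X_N_indep pern])
           (use k in simp_all)
    qed
  qed
qed


end
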